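(* Let $\lambda$ be a CW-labeling of a finite graded poset $P$ with $\hat0$. Then the posets $R_\lambda(P)$ and $Q_\lambda(P)$ are isomorphic.
   Context: C-labelings: a maximal chain is an unrefinable chain from $\hat0$ to a maximal element. A C-labeling assigns to each pair $(\mathbf m,e)$, $\mathbf m$ a maximal chain and $e$ a cover relation of $\mathbf m$, a label in a poset $\Lambda$, such that maximal chains coinciding along their bottom $d$ cover relations have equal labels there (so $\lambda(\mathbf c,x\lessdot y)$ is defined for saturated chains $\mathbf c$ from $\hat0$ containing $x\lessdot y$, or ending at $x$ and extended by $y$). A rooted interval $[x,y]_{\mathbf r}$ is an interval with a saturated chain $\mathbf r$ from $\hat0$ to $x$, a maximal chain $\mathbf c$ of $[x,y]$ being labeled as in $\mathbf r\cup\mathbf c$. Increasing = strictly increasing label word; ascent-free = no consecutive labels $a<b$. CR-labeling: each rooted interval has exactly one increasing maximal chain. Rank two switching property: for every maximal chain $\mathbf m:\hat0=m_0\lessdot\cdots\lessdot m_k$ and $i<k$ with an ascent at rank $i$ there is a unique $m_i'\ne m_i$ such that replacing $m_i$ by $m_i'$ gives a maximal chain with the same labels except that those at ranks $i,i+1$ are swapped, and $m_i'$ is the same for all maximal chains agreeing with $\mathbf m$ in $m_0,\dots,m_{i+1}$ (quadratic exchange $U_i$; identity when there is no ascent; also defined on saturated chains from $\hat0$). CW-labeling: CR-labeling with the rank two switching property such that in each rooted interval distinct ascent-free maximal chains have distinct label words. $Q_\lambda(P)$: $C(P)$ is the set of saturated chains from $\hat0$ ordered by inclusion; $\mathbf c_1\sim_\lambda\mathbf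 c_2$ iff they have the same top element $y$ and are connected by quadratic exchanges (forwards or backwards) among maximal chains of $[\hat0,y]$. $Q_\lambda(P)$ is the set of classes ordered by the transitive closure of: $X\le Y$ if some $\mathbf c\in X$, $\mathbf d\in Y$ have $\mathbf c\subseteq\mathbf d$. $\mathrm{sort}$: for a word $w$ over $\Lambda$, repeatedly replace an adjacent factor $w_iw_{i+1}$ with $w_i<w_{i+1}$ by $w_{i+1}w_i$; this yields a unique ascent-free word $\mathrm{sort}(w)$. $R_\lambda(P)$ is the poset whose elements are pairs $(x,w)$ with $x\in P$ and $w$ the word of labels of an ascent-free saturated chain $\mathbf c$ from $\hat0$ to $x$ (such $\mathbf c$ is determined by $w$), with cover relations $(x,w)\lessdot(y,u)$ whenever $x\lessdot y$ and $u=\mathrm{sort}(w\,\lambda(\mathbf c,x\lessdot y))$, where $\mathbf c$ is the chain determined by $w$ and juxtaposition denotes concatenation; the order is the reflexive-transitive closure of these covers. *)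

theory Defs
  imports Main
begin

text \<open>The poset is a carrier set P inside a type with a partial order. Chains are
lists of elements, listed from bottom to top.\<close>

definition cov :: "'a::order set \<Rightarrow> 'a \<Rightarrow> 'a \<Rightarrow> bool" where
  "cov P x y \<longleftrightarrow> x \<in> P \<and> y \<in> P \<and> x < y \<and> \<not> (\<exists>w\<in>P. x < w \<and> w < y)"

definition cover_chain :: "'a::order set \<Rightarrow> 'a list \<Rightarrow> bool" where
  "cover_chain P c \<longleftrightarrow> c \<noteq> [] \<and> set c \<subseteq> P \<and>
     (\<forall>i. Suc i < length c \<longrightarrow> cov P (c ! i) (c ! Suc i))"

definition sat_chain :: "'a::order set \<Rightarrow> 'a \<Rightarrow> 'a list \<Rightarrow> bool" where
  "sat_chain P z c \<longleftrightarrow> cover_chain P c \<and> hd c = z"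

definition max_chain :: "'a::order set \<Rightarrow> 'a \<Rightarrow> 'a list \<Rightarrow> bool" where
  "max_chain P z c \<longleftrightarrow> sat_chain P z c \<and> (\<forall>w\<in>P. \<not> last c < w)"

definition interval_chain :: "'a::order set \<Rightarrow> 'a \<Rightarrow> 'a \<Rightarrow> 'a list \<Rightarrow> bool" where
  "interval_chain P x y c \<longleftrightarrow> cover_chain P c \<and> hd c = x \<and> last c = y"

definition fin_graded_bot :: "'a::order set \<Rightarrow> 'a \<Rightarrow> bool" where
  "fin_graded_bot P z \<longleftrightarrow> finite P \<and> z \<in> P \<and> (\<forall>x\<in>P. z \<le> x) \<and>
     (\<forall>m m'. max_chain P z m \<longrightarrow> max_chain P z m' \<longrightarrow> length m = length m')"

text \<open>A labeling assigns to a maximal chain m and the index i of its cover relation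
  m!i \<lessdot> m!(i+1) a label lab m i in the poset of labels (a type of class order).\<close>

definition C_labeling :: "'a::order set \<Rightarrow> 'a \<Rightarrow> ('a list \<Rightarrow> nat \<Rightarrow> 'l::order) \<Rightarrow> bool" where
  "C_labeling P z lab \<longleftrightarrow> (\<forall>m m' d. max_chain P z m \<longrightarrow> max_chain P z m' \<longrightarrow>
     take (Suc d) m = take (Suc d) m' \<longrightarrow> (\<forall>i<d. lab m i = lab m' i))"

definition ext_chain :: "'a::order set \<Rightarrow> 'a \<Rightarrow> 'a list \<Rightarrow> 'a list" where
  "ext_chain P z c = (SOME m. max_chain P z m \<and> take (length c) m = c)"

definition word :: "'a::order set \<Rightarrow> 'a \<Rightarrow> ('a list \<Rightarrow> nat \<Rightarrow> 'l::order) \<Rightarrow> 'a list \<Rightarrow> 'l list" where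
  "word P z lab c = map (lab (ext_chain P z c)) [0..<length c - 1]"

definition ext_label :: "'a::order set \<Rightarrow> 'a \<Rightarrow> ('a list \<Rightarrow> nat \<Rightarrow> 'l::order) \<Rightarrow> 'a list \<Rightarrow> 'a \<Rightarrow> 'l" where
  "ext_label P z lab c y = lab (ext_chain P z (c @ [y])) (length c - 1)"

text \<open>label word of a maximal chain c of the rooted interval [last r, y]_r\<close>
definition rword :: "'a::order set \<Rightarrow> 'a \<Rightarrow> ('a list \<Rightarrow> nat \<Rightarrow> 'l::order) \<Rightarrow> 'a list \<Rightarrow> 'a list \<Rightarrow> 'l list" where
  "rword P z lab r c = drop (length r - 1) (word P z lab (r @ tl c))"

definition increasing :: "'l::order list \<Rightarrow> bool" where
  "increasing w \<longleftrightarrow> sorted_wrt (<) w"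

definition ascent_free :: "'l::order list \<Rightarrow> bool" where
  "ascent_free w \<longleftrightarrow> (\<forall>i. Suc i < length w \<longrightarrow> \<not> w ! i < w ! Suc i)"

definition CR_labeling :: "'a::order set \<Rightarrow> 'a \<Rightarrow> ('a list \<Rightarrow> nat \<Rightarrow> 'l::order) \<Rightarrow> bool" where
  "CR_labeling P z lab \<longleftrightarrow> C_labeling P z lab \<and>
     (\<forall>r y. sat_chain P z r \<longrightarrow> y \<in> P \<longrightarrow> last r \<le> y \<longrightarrow>
        (\<exists>!c. interval_chain P (last r) y c \<and> increasing (rword P z lab r c)))"

definition ascent_at :: "('a list \<Rightarrow> nat \<Rightarrow> 'l::order) \<Rightarrow> 'a list \<Rightarrow> nat \<Rightarrow> bool" where
  "ascent_at lab m i \<longleftrightarrow> 1 \<le> i \<and> Suc i < length m \<and> lab m (i - 1) < lab m i"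

definition switch_ok :: "'a::order set \<Rightarrow> 'a \<Rightarrow> ('a list \<Rightarrow> nat \<Rightarrow> 'l::order) \<Rightarrow> 'a list \<Rightarrow> nat \<Rightarrow> 'a \<Rightarrow> bool" where
  "switch_ok P z lab m i x \<longleftrightarrow> x \<noteq> m ! i \<and> max_chain P z (m[i := x]) \<and>
     lab (m[i := x]) (i - 1) = lab m i \<and> lab (m[i := x]) i = lab m (i - 1) \<and>
     (\<forall>j. Suc j < length m \<longrightarrow> j \<noteq> i - 1 \<longrightarrow> j \<noteq> i \<longrightarrow> lab (m[i := x]) j = lab m j)"

definition rank_two_switching :: "'a::order set \<Rightarrow> 'a \<Rightarrow> ('a list \<Rightarrow> nat \<Rightarrow> 'l::order) \<Rightarrow> bool" where
  "rank_two_switching P z lab \<longleftrightarrow>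
     (\<forall>m i. max_chain P z m \<longrightarrow> ascent_at lab m i \<longrightarrow>
        (\<exists>!x. switch_ok P z lab m i x) \<and>
        (\<forall>n. max_chain P z n \<longrightarrow> take (i + 2) n = take (i + 2) m \<longrightarrow>
            (THE x. switch_ok P z lab n i x) = (THE x. switch_ok P z lab m i x)))"

definition CW_labeling :: "'a::order set \<Rightarrow> 'a \<Rightarrow> ('a list \<Rightarrow> nat \<Rightarrow> 'l::order) \<Rightarrow> bool" where
  "CW_labeling P z lab \<longleftrightarrow> CR_labeling P z lab \<and> rank_two_switching P z lab \<and>
     (\<forall>r y c c'. sat_chain P z r \<longrightarrow> y \<in> P \<longrightarrow> last r \<le> y \<longrightarrow>
        interval_chain P (last r) y c \<longrightarrow> interval_chain P (last r) y c' \<longrightarrow>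
        ascent_free (rword P z lab r c) \<longrightarrow> ascent_free (rword P z lab r c') \<longrightarrow>
        c \<noteq> c' \<longrightarrow> rword P z lab r c \<noteq> rword P z lab r c')"

definition quad_ex :: "'a::order set \<Rightarrow> 'a \<Rightarrow> ('a list \<Rightarrow> nat \<Rightarrow> 'l::order) \<Rightarrow> nat \<Rightarrow> 'a list \<Rightarrow> 'a list" where
  "quad_ex P z lab i c = (let m = ext_chain P z c in
     if Suc i < length c \<and> ascent_at lab m i
     then c[i := (THE x. switch_ok P z lab m i x)] else c)"

definition quad_step :: "'a::order set \<Rightarrow> 'a \<Rightarrow> ('a list \<Rightarrow> nat \<Rightarrow> 'l::order) \<Rightarrow> 'a list \<Rightarrow> 'a list \<Rightarrow> bool" where
  "quad_step P z lab c d \<longleftrightarrow> sat_chain P z c \<and> sat_chain P z d \<and> last c = last d \<and>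
     ((\<exists>i. Suc i < length c \<and> d = quad_ex P z lab i c) \<or>
      (\<exists>i. Suc i < length d \<and> c = quad_ex P z lab i d))"

definition qsim :: "'a::order set \<Rightarrow> 'a \<Rightarrow> ('a list \<Rightarrow> nat \<Rightarrow> 'l::order) \<Rightarrow> 'a list \<Rightarrow> 'a list \<Rightarrow> bool" where
  "qsim P z lab c d \<longleftrightarrow> sat_chain P z c \<and> sat_chain P z d \<and> last c = last d \<and>
     (quad_step P z lab)\<^sup>*\<^sup>* c d"

definition Qset :: "'a::order set \<Rightarrow> 'a \<Rightarrow> ('a list \<Rightarrow> nat \<Rightarrow> 'l::order) \<Rightarrow> 'a list set set" where
  "Qset P z lab = {X. \<exists>c. sat_chain P z c \<and> X = {d. qsim P z lab c d}}"

definition Qle :: "'a::order set \<Rightarrow> 'a \<Rightarrow> ('a list \<Rightarrow> nat \<Rightarrow> 'l::order) \<Rightarrow> 'a list set \<Rightarrow> 'a list set \<Rightarrow> bool" where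
  "Qle P z lab = (\<lambda>X Y. X \<in> Qset P z lab \<and> Y \<in> Qset P z lab \<and>
      (\<exists>c\<in>X. \<exists>d\<in>Y. set c \<subseteq> set d))\<^sup>+\<^sup>+"

definition sort_step :: "'l::order list \<Rightarrow> 'l list \<Rightarrow> bool" where
  "sort_step w v \<longleftrightarrow> (\<exists>a b x y. w = a @ [x, y] @ b \<and> x < y \<and> v = a @ [y, x] @ b)"

definition sortw :: "'l::order list \<Rightarrow> 'l list" where
  "sortw w = (THE v. sort_step\<^sup>*\<^sup>* w v \<and> ascent_free v)"

definition Rset :: "'a::order set \<Rightarrow> 'a \<Rightarrow> ('a list \<Rightarrow> nat \<Rightarrow> 'l::order) \<Rightarrow> ('a \<times> 'l list) set" where
  "Rset P z lab = {(x, w). \<exists>c. sat_chain P z c \<and> last c = x \<and>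
       ascent_free (word P z lab c) \<and> w = word P z lab c}"

definition Rchain :: "'a::order set \<Rightarrow> 'a \<Rightarrow> ('a list \<Rightarrow> nat \<Rightarrow> 'l::order) \<Rightarrow> 'a \<Rightarrow> 'l list \<Rightarrow> 'a list" where
  "Rchain P z lab x w = (THE c. sat_chain P z c \<and> last c = x \<and> word P z lab c = w)"

definition Rcov :: "'a::order set \<Rightarrow> 'a \<Rightarrow> ('a list \<Rightarrow> nat \<Rightarrow> 'l::order) \<Rightarrow> 'a \<times> 'l list \<Rightarrow> 'a \<times> 'l list \<Rightarrow> bool" where
  "Rcov P z lab a b \<longleftrightarrow> a \<in> Rset P z lab \<and> b \<in> Rset P z lab \<and> cov P (fst a) (fst b) \<and>
     snd b = sortw (snd a @ [ext_label P z lab (Rchain P z lab (fst a) (snd a)) (fst b)])"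

definition Rle :: "'a::order set \<Rightarrow> 'a \<Rightarrow> ('a list \<Rightarrow> nat \<Rightarrow> 'l::order) \<Rightarrow> 'a \<times> 'l list \<Rightarrow> 'a \<times> 'l list \<Rightarrow> bool" where
  "Rle P z lab a b \<longleftrightarrow> a \<in> Rset P z lab \<and> b \<in> Rset P z lab \<and> (Rcov P z lab)\<^sup>*\<^sup>* a b"

end

theory Submission
  imports Defs
begin


definition swp :: "nat \<Rightarrow> 'l list \<Rightarrow> 'l list" where
  "swp i w = w[i := w!Suc i, Suc i := w!i]"

lemma sort_step_idx:
  "sort_step w v \<longleftrightarrow> (\<exists>i. Suc i < length w \<and> w!i < w!Suc i \<and> v = swp i w)"
proof
  assume "sort_step w v"
  then obtain a b x y where "w = a @ [x, y] @ b" "x < y" "v = a @ [y, x] @ b"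
    unfolding sort_step_def by blast
  then show "\<exists>i. Suc i < length w \<and> w!i < w!Suc i \<and> v = swp i w"
    by (intro exI[of _ "length a"]) (auto simp: swp_def nth_append list_update_append)
next
  assume "\<exists>i. Suc i < length w \<and> w!i < w!Suc i \<and> v = swp i w"
  then obtain i where i: "Suc i < length w" "w!i < w!Suc i" "v = swp i w" by blast
  have w: "w = take i w @ [w!i, w!Suc i] @ drop (Suc (Suc i)) w"
    using i(1) by (simp add: Cons_nth_drop_Suc id_take_nth_drop)
  define a where "a = take i w"
  define b where "b = drop (Suc (Suc i)) w"
  have la: "length a = i" using i(1) by (simp add: a_def)
  have "v = swp (length a) (a @ [w!i, w!Suc i] @ b)"
    using i(3) w la unfolding a_def b_def by simp
  hence "v = a @ [w!Suc i, w!i] @ b" by (simp add: swp_def list_update_append nth_append)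
  then show "sort_step w v" unfolding sort_step_def using i(2) w a_def b_def by blast
qed

fun ninv :: "'l::order list \<Rightarrow> nat" where
  "ninv [] = 0"
| "ninv (x # xs) = length (filter (\<lambda>y. x < y) xs) + ninv xs"

lemma ninv_swap: "(x::'l::order) < y \<Longrightarrow> ninv (a @ [y, x] @ b) < ninv (a @ [x, y] @ b)"
  by (induction a) auto

lemma ninv_step: "sort_step w v \<Longrightarrow> ninv v < ninv w"
  unfolding sort_step_def using ninv_swap by blast

lemma ascent_free_iff: "ascent_free w \<longleftrightarrow> \<not> (\<exists>v. sort_step w v)"
  unfolding ascent_free_def sort_step_idx by blast

lemma nf_exists: "\<exists>v. sort_step\<^sup>*\<^sup>* w v \<and> ascent_free v"
proof (induction w rule: measure_induct_rule[of ninv])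
  case (less w)
  show ?case
  proof (cases "ascent_free w")
    case True then show ?thesis by blast
  next
    case False
    then obtain v where v: "sort_step w v" using ascent_free_iff by blast
    then obtain u where "sort_step\<^sup>*\<^sup>* v u" "ascent_free u"
      using less ninv_step by blast
    then show ?thesis using v by (meson converse_rtranclp_into_rtranclp)
  qed
qed

lemma lc_aux:
  assumes "Suc i < length w" "Suc j < length w" "w!i < w!Suc i" "w!j < w!Suc j" "i < j"
  shows "\<exists>u. sort_step\<^sup>*\<^sup>* (swp i w) u \<and> sort_step\<^sup>*\<^sup>* (swp j w) u"
proof (cases "j = Suc i")
  case True
  define u where "u = w[i := w!Suc (Suc i), Suc (Suc i) := w!i]"
  define v1 where "v1 = (swp i w)[Suc i := w!Suc (Suc i), Suc (Suc i) := w!i]"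
  define v2 where "v2 = (swp j w)[i := w!Suc (Suc i), Suc i := w!i]"
  have ss: "Suc (Suc i) < length w" using assms True by simp
  have lt: "w!i < w!Suc (Suc i)" using assms True by (meson order.strict_trans)
  have 1: "sort_step (swp i w) v1"
    unfolding sort_step_idx
    by (rule exI[of _ "Suc i"]) (use ss lt in \<open>auto simp: swp_def v1_def nth_list_update\<close>)
  have 2: "sort_step v1 u"
    unfolding sort_step_idx
    apply (rule exI[of _ i])
    using ss assms True
    by (auto simp: swp_def v1_def u_def nth_list_update list_eq_iff_nth_eq)
  have 3: "sort_step (swp j w) v2"
    unfolding sort_step_idx
    by (rule exI[of _ i]) (use ss lt True in \<open>auto simp: swp_def v2_def nth_list_update\<close>)
  have 4: "sort_step v2 u"
    unfolding sort_step_idx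
    apply (rule exI[of _ "Suc i"])
    using ss assms True
    by (auto simp: swp_def v2_def u_def nth_list_update list_eq_iff_nth_eq)
  show ?thesis using 1 2 3 4 by (meson rtranclp.rtrancl_into_rtrancl rtranclp.rtrancl_refl)
next
  case False
  hence ij: "Suc i < j" using assms by simp
  have 1: "sort_step (swp i w) (swp j (swp i w))"
    unfolding sort_step_idx
    by (rule exI[of _ j]) (use ij assms in \<open>auto simp: swp_def nth_list_update\<close>)
  have 2: "sort_step (swp j w) (swp i (swp j w))"
    unfolding sort_step_idx
    by (rule exI[of _ i]) (use ij assms in \<open>auto simp: swp_def nth_list_update\<close>)
  have 3: "swp i (swp j w) = swp j (swp i w)"
    using ij assms by (auto simp: swp_def nth_list_update list_eq_iff_nth_eq)
  show ?thesis using 1 2 3 by (metis r_into_rtranclp)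
qed

lemma local_conf:
  assumes "sort_step w v1" "sort_step w v2"
  shows "\<exists>u. sort_step\<^sup>*\<^sup>* v1 u \<and> sort_step\<^sup>*\<^sup>* v2 u"
proof -
  obtain i where i: "Suc i < length w" "w!i < w!Suc i" "v1 = swp i w"
    using assms(1) sort_step_idx by blast
  obtain j where j: "Suc j < length w" "w!j < w!Suc j" "v2 = swp j w"
    using assms(2) sort_step_idx by blast
  consider "i = j" | "i < j" | "j < i" by linarith
  then show ?thesis
  proof cases
    case 1 then show ?thesis using i j by blast
  next
    case 2 then show ?thesis using lc_aux[OF i(1) j(1) i(2) j(2)] i j by blast
  next
    case 3 then show ?thesis using lc_aux[OF j(1) i(1) j(2) i(2)] i j by blast
  qed
qed

lemma nf_unique:
  "sort_step\<^sup>*\<^sup>* w v1 \<Longrightarrow> sort_step\<^sup>*\<^sup>* w v2 \<Longrightarrow> ascent_free v1 \<Longrightarrow> ascent_free v2 \<Longrightarrow> v1 = v2"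
proof (induction w arbitrary: v1 v2 rule: measure_induct_rule[of ninv])
  case (less w)
  show ?case
  proof (cases "ascent_free w")
    case True
    then have "\<And>v. sort_step\<^sup>*\<^sup>* w v \<Longrightarrow> v = w"
      using ascent_free_iff by (metis converse_rtranclpE)
    then show ?thesis using less.prems by metis
  next
    case False
    from less.prems(1) obtain w1 where w1: "sort_step w w1" "sort_step\<^sup>*\<^sup>* w1 v1"
      using False ascent_free_iff less.prems(3) by (metis converse_rtranclpE)
    from less.prems(2) obtain w2 where w2: "sort_step w w2" "sort_step\<^sup>*\<^sup>* w2 v2"
      using False ascent_free_iff less.prems(4) by (metis converse_rtranclpE)
    obtain u where u: "sort_step\<^sup>*\<^sup>* w1 u" "sort_step\<^sup>*\<^sup>* w2 u"
      using local_conf[OF w1(1) w2(1)] by blast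
    obtain n where n: "sort_step\<^sup>*\<^sup>* u n" "ascent_free n" using nf_exists by blast
    have "v1 = n" using less.IH[of w1 v1 n] ninv_step[OF w1(1)] w1(2) u(1) n less.prems(3)
      by (meson rtranclp_trans)
    moreover have "v2 = n" using less.IH[of w2 v2 n] ninv_step[OF w2(1)] w2(2) u(2) n less.prems(4)
      by (meson rtranclp_trans)
    ultimately show ?thesis by simp
  qed
qed

lemma sortw_eq: "sort_step\<^sup>*\<^sup>* w v \<Longrightarrow> ascent_free v \<Longrightarrow> sortw w = v"
  unfolding sortw_def by (rule the_equality) (auto intro: nf_unique)

lemma sortw_spec: "sort_step\<^sup>*\<^sup>* w (sortw w) \<and> ascent_free (sortw w)"
  using nf_exists[of w] sortw_eq by metis

lemma sortw_af: "ascent_free w \<Longrightarrow> sortw w = w"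
  by (simp add: sortw_eq)

lemma sortw_steps: "sort_step\<^sup>*\<^sup>* w v \<Longrightarrow> sortw w = sortw v"
  using sortw_spec[of v] sortw_eq by (metis rtranclp_trans)



lemma cover_chain_take: "cover_chain P c \<Longrightarrow> 0 < k \<Longrightarrow> cover_chain P (take k c)"
  unfolding cover_chain_def by (auto dest: in_set_takeD)

lemma cover_chain_snoc:
  assumes "cover_chain P c"
  shows "cover_chain P (c @ [y]) \<longleftrightarrow> cov P (last c) y"
proof
  assume h: "cover_chain P (c @ [y])"
  have "c \<noteq> []" using assms cover_chain_def by blast
  then have "Suc (length c - 1) < length (c @ [y])" by simp
  then have "cov P ((c@[y]) ! (length c - 1)) ((c@[y]) ! Suc (length c - 1))"
    using h cover_chain_def by blast
  then show "cov P (last c) y" using \<open>c \<noteq> []\<close>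
    by (simp add: nth_append last_conv_nth)
next
  assume h: "cov P (last c) y"
  have ne: "c \<noteq> []" using assms cover_chain_def by blast
  have "y \<in> P" using h cov_def by blast
  moreover have "cov P ((c@[y])!i) ((c@[y])!Suc i)" if "Suc i < length (c@[y])" for i
  proof (cases "Suc i < length c")
    case True then show ?thesis using assms cover_chain_def by (auto simp: nth_append)
  next
    case False
    then have "i = length c - 1" using that by simp
    then show ?thesis using h ne by (simp add: nth_append last_conv_nth)
  qed
  moreover have "set (c @ [y]) \<subseteq> P" using assms \<open>y \<in> P\<close> cover_chain_def by auto
  ultimately show "cover_chain P (c @ [y])" unfolding cover_chain_def by blast
qed

lemma cover_chain_lt: "cover_chain P c \<Longrightarrow> i < j \<Longrightarrow> j < length c \<Longrightarrow> c!i < c!j"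
proof (induction j)
  case 0 then show ?case by simp
next
  case (Suc j)
  have "cov P (c!j) (c!Suc j)" using Suc.prems cover_chain_def by blast
  then have "c!j < c!Suc j" by (simp add: cov_def)
  then show ?case using Suc by (cases "i = j") auto
qed

lemma cover_chain_le: "cover_chain P c \<Longrightarrow> i \<le> j \<Longrightarrow> j < length c \<Longrightarrow> c!i \<le> c!j"
  using cover_chain_lt[of P c i j] by (cases "i = j") auto

lemma cover_chain_distinct: "cover_chain P c \<Longrightarrow> distinct c"
  unfolding distinct_conv_nth
proof (intro allI impI)
  fix i j assume c: "cover_chain P c" and ij: "i < length c" "j < length c" "i \<noteq> j"
  show "c!i \<noteq> c!j"
  proof (cases "i < j")
    case True then show ?thesis using cover_chain_lt[OF c True ij(2)] by simp
  next
    case False then have "j < i" using ij by simp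
    then show ?thesis using cover_chain_lt[OF c _ ij(1)] by fastforce
  qed
qed

lemma cover_chain_prefix:
  assumes c: "cover_chain P c" and d: "cover_chain P d" and h: "hd c = hd d"
    and s: "set c \<subseteq> set d"
  shows "\<exists>e. d = c @ e"
proof -
  have ne: "c \<noteq> []" "d \<noteq> []" using c d cover_chain_def by auto
  have key: "k < length d \<and> c!k = d!k" if "k < length c" for k
    using that
  proof (induction k)
    case 0 then show ?case using ne h by (simp add: hd_conv_nth)
  next
    case (Suc k)
    then have IH: "k < length d" "c!k = d!k" by auto
    have cv: "cov P (c!k) (c!Suc k)" using c Suc.prems cover_chain_def by blast
    have "c!Suc k \<in> set d" using s Suc.prems by auto
    then obtain j where j: "j < length d" "d!j = c!Suc k" by (auto simp: in_set_conv_nth)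
    have "k < j"
    proof (rule ccontr)
      assume "\<not> k < j"
      then have "d!j \<le> d!k" using cover_chain_le[OF d] IH by simp
      moreover have "c!k < c!Suc k" using cv cov_def by blast
      ultimately show False using j IH by (metis order.strict_trans2 order_less_irrefl)
    qed
    have "j = Suc k"
    proof (rule ccontr)
      assume "j \<noteq> Suc k"
      then have "Suc k < j" using \<open>k < j\<close> by simp
      then have "d!Suc k < d!j" "d!k < d!Suc k" using cover_chain_lt[OF d, of "Suc k" j] cover_chain_lt[OF d, of k "Suc k"] j by auto
      moreover have "d!Suc k \<in> P" using d j \<open>Suc k < j\<close> unfolding cover_chain_def
        by (meson nth_mem order.strict_trans subsetD)
      ultimately have "c!k < d!Suc k \<and> d!Suc k < c!Suc k" "d!Suc k \<in> P" using j IH by auto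
      then show False using cv unfolding cov_def by blast
    qed
    then show ?case using j by simp
  qed
  have "length c - 1 < length d" using key[of "length c - 1"] ne by simp
  then have "length c \<le> length d" using ne by (cases c) auto
  moreover have "take (length c) d = c"
    using key by (simp add: list_eq_iff_nth_eq calculation)
  ultimately show ?thesis by (metis append_take_drop_id)
qed

locale cw =
  fixes P :: "'a::order set" and z :: 'a and lab :: "'a list \<Rightarrow> nat \<Rightarrow> 'l::order"
  assumes fg: "fin_graded_bot P z"
    and cwl: "CW_labeling P z lab"
begin

lemma finP: "finite P" and zP: "z \<in> P" and zle: "\<And>x. x \<in> P \<Longrightarrow> z \<le> x"
  using fg unfolding fin_graded_bot_def by auto

lemma Clab: "C_labeling P z lab"
  using cwl unfolding CW_labeling_def CR_labeling_def by (elim conjE)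

lemma r2s: "rank_two_switching P z lab"
  using cwl unfolding CW_labeling_def by (elim conjE)

lemma sat_take: "sat_chain P z c \<Longrightarrow> 0 < k \<Longrightarrow> sat_chain P z (take k c)"
  unfolding sat_chain_def using cover_chain_take[of P c k]
  by (simp add: cover_chain_def)

lemma sat_snoc: "sat_chain P z c \<Longrightarrow> sat_chain P z (c @ [y]) \<longleftrightarrow> cov P (last c) y"
  unfolding sat_chain_def using cover_chain_snoc[of P c y]
  by (auto simp: cover_chain_def)

lemma sat_ne: "sat_chain P z c \<Longrightarrow> c \<noteq> []"
  unfolding sat_chain_def cover_chain_def by simp

lemma sat_last: "sat_chain P z c \<Longrightarrow> last c \<in> P"
  unfolding sat_chain_def cover_chain_def by auto

lemma max_ext_exists:
  "sat_chain P z c \<Longrightarrow> \<exists>m. max_chain P z m \<and> take (length c) m = c"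
proof (induction "card P - length c" arbitrary: c rule: less_induct)
  case less
  show ?case
  proof (cases "\<forall>w\<in>P. \<not> last c < w")
    case True
    then show ?thesis using less.prems by (intro exI[of _ c]) (simp add: max_chain_def)
  next
    case False
    define S where "S = {w\<in>P. last c < w}"
    have "finite S" "S \<noteq> {}" using finP False S_def by auto
    then obtain y where y: "y \<in> S" "\<forall>b\<in>S. b \<le> y \<longrightarrow> y = b"
      using finite_has_minimal by blast
    have "cov P (last c) y"
      using y sat_last[OF less.prems] unfolding S_def cov_def
      by (metis (mono_tags, lifting) mem_Collect_eq order.strict_trans order_less_imp_le order_less_irrefl)
    then have s: "sat_chain P z (c @ [y])" using sat_snoc less.prems by blast
    have "distinct (c @ [y])" using s sat_chain_def cover_chain_distinct by blast
    moreover have "set (c @ [y]) \<subseteq> P" using s sat_chain_def cover_chain_def by blast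
    ultimately have "length (c @ [y]) \<le> card P"
      using distinct_card[of "c @ [y]"] card_mono[OF finP, of "set (c @ [y])"] by linarith
    then have "card P - length (c @ [y]) < card P - length c" by simp
    then have "\<exists>m. max_chain P z m \<and> take (length (c @ [y])) m = c @ [y]"
      by (rule less.hyps[OF _ s])
    then obtain m where m: "max_chain P z m" "take (length (c @ [y])) m = c @ [y]"
      by blast
    have "take (length c) m = take (length c) (take (length (c @ [y])) m)" by simp
    also have "\<dots> = c" using m(2) by simp
    finally show ?thesis using m(1) by blast
  qed
qed

lemma ext_chain_spec:
  "sat_chain P z c \<Longrightarrow> max_chain P z (ext_chain P z c) \<and> take (length c) (ext_chain P z c) = c"
proof -
  assume "sat_chain P z c"
  then obtain m where "max_chain P z m \<and> take (length c) m = c" using max_ext_exists by blast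
  then show ?thesis unfolding ext_chain_def by (rule someI)
qed

lemma take_len_le: "take n m = c \<Longrightarrow> length c = n \<Longrightarrow> n \<le> length m"
  by auto

lemma LW:
  assumes "max_chain P z m" "max_chain P z m'" "take k m = take k m'" "i < k - 1"
  shows "lab m i = lab m' i"
proof -
  have "take (Suc (k - 1)) m = take (Suc (k - 1)) m'" using assms(3,4) by simp
  then show ?thesis using Clab assms C_labeling_def by blast
qed

lemma word_max:
  assumes "sat_chain P z c" "max_chain P z m" "take (length c) m = c"
  shows "word P z lab c = map (lab m) [0..<length c - 1]"
  unfolding word_def
proof (rule map_cong[OF refl])
  fix i assume "i \<in> set [0..<length c - 1]"
  then have "i < length c - 1" by simp
  then show "lab (ext_chain P z c) i = lab m i"
    using LW[of "ext_chain P z c" m "length c" i] ext_chain_spec[OF assms(1)] assms by simp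
qed

lemma length_word: "length (word P z lab c) = length c - 1"
  by (simp add: word_def)

lemma word_snoc:
  assumes "sat_chain P z (c @ [y])" and c: "sat_chain P z c"
  shows "word P z lab (c @ [y]) = word P z lab c @ [ext_label P z lab c y]"
proof -
  have ne: "c \<noteq> []" using sat_ne[OF c] .
  let ?m = "ext_chain P z (c @ [y])"
  have m: "max_chain P z ?m" "take (Suc (length c)) ?m = c @ [y]"
    using ext_chain_spec[OF assms(1)] by auto
  have "take (length c) ?m = take (length c) (take (Suc (length c)) ?m)" by simp
  then have mc: "take (length c) ?m = c" using m(2) by simp
  have "word P z lab (c @ [y]) = map (lab ?m) [0..<length c]"
    using word_max[OF assms(1) m(1)] m(2) by simp
  also have "[0..<length c] = [0..<length c - 1] @ [length c - 1]"
    using ne by (metis Suc_diff_1 length_greater_0_conv upt_Suc_append zero_le)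
  finally show ?thesis
    using word_max[OF c m(1) mc] by (simp add: ext_label_def)
qed

end


context cw begin

lemma max_sat: "max_chain P z m \<Longrightarrow> sat_chain P z m"
  unfolding max_chain_def by simp

lemma ext_len: "sat_chain P z c \<Longrightarrow> length c \<le> length (ext_chain P z c)"
proof -
  assume "sat_chain P z c"
  then have "length (take (length c) (ext_chain P z c)) = length c" using ext_chain_spec[of c] by simp
  then show ?thesis by (simp add: min_def split: if_splits)
qed

lemma quad_ex_id:
  "\<not> (Suc i < length c \<and> ascent_at lab (ext_chain P z c) i) \<Longrightarrow> quad_ex P z lab i c = c"
  unfolding quad_ex_def Let_def by auto

lemma quad_ex_main:
  assumes c: "sat_chain P z c" and i: "Suc i < length c"
    and asc: "ascent_at lab (ext_chain P z c) i"
  shows "sat_chain P z (quad_ex P z lab i c) \<and> last (quad_ex P z lab i c) = last c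
     \<and> sort_step (word P z lab c) (word P z lab (quad_ex P z lab i c))"
proof -
  define m where "m = ext_chain P z c"
  have m: "max_chain P z m" "take (length c) m = c" using ext_chain_spec[OF c] m_def by auto
  have lm: "length c \<le> length m" using ext_len[OF c] m_def by simp
  have asc': "ascent_at lab m i" using asc m_def by simp
  have "\<exists>!x. switch_ok P z lab m i x" using r2s m(1) asc' unfolding rank_two_switching_def by blast
  then have sw: "switch_ok P z lab m i (THE x. switch_ok P z lab m i x)" by (rule theI')
  define x where "x = (THE x. switch_ok P z lab m i x)"
  have sw': "switch_ok P z lab m i x" using sw x_def by simp
  have q: "quad_ex P z lab i c = c[i := x]"
    unfolding quad_ex_def Let_def using i asc m_def x_def by simp
  define m' where "m' = m[i := x]"
  have m': "max_chain P z m'" using sw' m'_def switch_ok_def by blast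
  have tm': "take (length c) m' = c[i := x]" using m(2) m'_def by (simp add: take_update_swap)
  have c': "sat_chain P z (c[i := x])"
    using sat_take[OF max_sat[OF m'], of "length c"] tm' sat_ne[OF c] by simp
  have lst: "last (c[i := x]) = last c"
    using i sat_ne[OF c] by (subst last_list_update) auto
  have i1: "1 \<le> i" using asc' ascent_at_def by blast
  have w: "word P z lab c = map (lab m) [0..<length c - 1]" by (rule word_max[OF c m])
  have w': "word P z lab (c[i := x]) = map (lab m') [0..<length c - 1]"
    using word_max[OF c' m'] tm' by simp
  have labs: "lab m' (i - 1) = lab m i" "lab m' i = lab m (i - 1)"
    "\<And>j. Suc j < length m \<Longrightarrow> j \<noteq> i - 1 \<Longrightarrow> j \<noteq> i \<Longrightarrow> lab m' j = lab m j"
    using sw' unfolding switch_ok_def m'_def by auto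
  have lt: "lab m (i - 1) < lab m i" using asc' ascent_at_def by blast
  have st: "sort_step (word P z lab c) (word P z lab (c[i := x]))"
    unfolding sort_step_idx
  proof (intro exI[of _ "i - 1"] conjI)
    show "Suc (i - 1) < length (word P z lab c)" using i i1 by (simp add: length_word)
    show "word P z lab c ! (i - 1) < word P z lab c ! Suc (i - 1)"
      using w lt i i1 by simp
    show "word P z lab (c[i := x]) = swp (i - 1) (word P z lab c)"
    proof (rule nth_equalityI)
      show "length (word P z lab (c[i := x])) = length (swp (i - 1) (word P z lab c))"
        by (simp add: length_word swp_def)
      fix j assume "j < length (word P z lab (c[i := x]))"
      then have j: "j < length c - 1" by (simp add: length_word)
      have sj: "Suc j < length m" using j lm by simp
      show "word P z lab (c[i := x]) ! j = swp (i - 1) (word P z lab c) ! j"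
        using j i i1 sj labs unfolding w w' swp_def
        by (auto simp: nth_list_update)
    qed
  qed
  show ?thesis using q c' lst st by simp
qed

lemma quad_ex_word:
  assumes c: "sat_chain P z c"
  shows "sort_step\<^sup>*\<^sup>* (word P z lab c) (word P z lab (quad_ex P z lab i c))"
proof (cases "Suc i < length c \<and> ascent_at lab (ext_chain P z c) i")
  case True then show ?thesis using quad_ex_main[OF c] by blast
next
  case False then show ?thesis using quad_ex_id by simp
qed

lemma quad_step_sortw: "quad_step P z lab c d \<Longrightarrow> sortw (word P z lab c) = sortw (word P z lab d)"
proof -
  assume qs: "quad_step P z lab c d"
  then have c: "sat_chain P z c" "sat_chain P z d" unfolding quad_step_def by auto
  from qs consider (a) i where "d = quad_ex P z lab i c" | (b) i where "c = quad_ex P z lab i d"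
    unfolding quad_step_def by blast
  then show ?thesis
  proof cases
    case a then show ?thesis using sortw_steps[OF quad_ex_word[OF c(1)]] by simp
  next
    case b then show ?thesis using sortw_steps[OF quad_ex_word[OF c(2)]] by simp
  qed
qed

lemma quad_steps_sortw:
  "(quad_step P z lab)\<^sup>*\<^sup>* c d \<Longrightarrow> sortw (word P z lab c) = sortw (word P z lab d)"
  by (induction rule: rtranclp_induct) (auto simp: quad_step_sortw)

lemma qsim_sortw: "qsim P z lab c d \<Longrightarrow> sortw (word P z lab c) = sortw (word P z lab d)"
  unfolding qsim_def using quad_steps_sortw by blast

lemma qsim_refl: "sat_chain P z c \<Longrightarrow> qsim P z lab c c"
  unfolding qsim_def by simp

lemma quad_step_sym: "quad_step P z lab c d \<Longrightarrow> quad_step P z lab d c"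
  unfolding quad_step_def by auto

lemma qsim_sym: "qsim P z lab c d \<Longrightarrow> qsim P z lab d c"
proof -
  have "symp (quad_step P z lab)" using quad_step_sym by (rule sympI)
  then have "symp (quad_step P z lab)\<^sup>*\<^sup>*" by (rule symp_rtranclp)
  then show "qsim P z lab c d \<Longrightarrow> qsim P z lab d c"
    unfolding qsim_def by (auto dest: sympD)
qed

lemma qsim_trans: "qsim P z lab c d \<Longrightarrow> qsim P z lab d e \<Longrightarrow> qsim P z lab c e"
proof -
  assume "qsim P z lab c d" "qsim P z lab d e"
  then have a: "sat_chain P z c" "last c = last d" "(quad_step P z lab)\<^sup>*\<^sup>* c d"
    and b: "sat_chain P z e" "last d = last e" "(quad_step P z lab)\<^sup>*\<^sup>* d e"
    unfolding qsim_def by auto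
  have "(quad_step P z lab)\<^sup>*\<^sup>* c e" using a(3) b(3) by (rule rtranclp_trans)
  then show ?thesis unfolding qsim_def using a b by (intro conjI) auto
qed

lemma qsim_class: "qsim P z lab c d \<Longrightarrow> {e. qsim P z lab c e} = {e. qsim P z lab d e}"
proof -
  assume q: "qsim P z lab c d"
  show ?thesis
  proof (intro set_eqI iffI; simp)
    fix e assume "qsim P z lab c e" then show "qsim P z lab d e" using q qsim_sym qsim_trans by blast
  next
    fix e assume "qsim P z lab d e" then show "qsim P z lab c e" using q qsim_trans by blast
  qed
qed

lemma qsim_sat: "qsim P z lab c d \<Longrightarrow> sat_chain P z c \<and> sat_chain P z d \<and> last c = last d"
  unfolding qsim_def by blast

lemma quad_ex_snoc:
  assumes cy: "sat_chain P z (c @ [y])" and c: "sat_chain P z c" and i: "Suc i < length c"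
  shows "quad_ex P z lab i (c @ [y]) = quad_ex P z lab i c @ [y]"
proof -
  define m1 where "m1 = ext_chain P z c"
  define m2 where "m2 = ext_chain P z (c @ [y])"
  have m1: "max_chain P z m1" "take (length c) m1 = c" using ext_chain_spec[OF c] m1_def by auto
  have m2: "max_chain P z m2" "take (Suc (length c)) m2 = c @ [y]"
    using ext_chain_spec[OF cy] m2_def by auto
  have "take (length c) m2 = take (length c) (take (Suc (length c)) m2)" by simp
  then have m2c: "take (length c) m2 = c" using m2(2) by simp
  have l1: "length c \<le> length m1" using ext_len[OF c] m1_def by simp
  have l2: "Suc (length c) \<le> length m2" using ext_len[OF cy] m2_def by simp
  have tk: "take (length c) m1 = take (length c) m2" using m1(2) m2c by simp
  have lab_eq: "lab m1 j = lab m2 j" if "j < length c - 1" for j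
    using LW[OF m1(1) m2(1) tk that] .
  have asc: "ascent_at lab m1 i \<longleftrightarrow> ascent_at lab m2 i"
    unfolding ascent_at_def using lab_eq[of i] lab_eq[of "i - 1"] i l1 l2 by auto
  show ?thesis
  proof (cases "ascent_at lab m1 i")
    case True
    have t2: "take (i + 2) m2 = take (i + 2) m1"
    proof -
      have "take (i + 2) m2 = take (i + 2) (take (length c) m2)" using i by (simp add: min_def)
      also have "\<dots> = take (i + 2) (take (length c) m1)" using tk by simp
      also have "\<dots> = take (i + 2) m1" using i by (simp add: min_def)
      finally show ?thesis .
    qed
    have "(THE x. switch_ok P z lab m2 i x) = (THE x. switch_ok P z lab m1 i x)"
      using r2s m1(1) True m2(1) t2 unfolding rank_two_switching_def by blast
    then show ?thesis
      unfolding quad_ex_def Let_def m1_def[symmetric] m2_def[symmetric]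
      using True asc i by (simp add: list_update_append)
  next
    case False
    then show ?thesis
      unfolding quad_ex_def Let_def m1_def[symmetric] m2_def[symmetric]
      using asc by simp
  qed
qed

lemma quad_step_snoc:
  assumes qs: "quad_step P z lab c d" and cy: "sat_chain P z (c @ [y])"
  shows "quad_step P z lab (c @ [y]) (d @ [y])"
proof -
  have c: "sat_chain P z c" "sat_chain P z d" "last c = last d"
    using qs unfolding quad_step_def by auto
  have cov: "cov P (last c) y" using sat_snoc[OF c(1)] cy by simp
  have dy: "sat_chain P z (d @ [y])" using sat_snoc[OF c(2)] cov c(3) by simp
  have lst: "last (c @ [y]) = last (d @ [y])" by simp
  from qs consider (a) i where "Suc i < length c" "d = quad_ex P z lab i c"
    | (b) i where "Suc i < length d" "c = quad_ex P z lab i d"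
    unfolding quad_step_def by blast
  then show ?thesis
  proof cases
    case a
    then have "d @ [y] = quad_ex P z lab i (c @ [y])" using quad_ex_snoc[OF cy c(1)] by simp
    then have "\<exists>i. Suc i < length (c @ [y]) \<and> d @ [y] = quad_ex P z lab i (c @ [y])"
      using a(1) by (intro exI[of _ i]) simp
    then show ?thesis unfolding quad_step_def using cy dy lst by blast
  next
    case b
    then have "c @ [y] = quad_ex P z lab i (d @ [y])" using quad_ex_snoc[OF dy c(2)] by simp
    then have "\<exists>i. Suc i < length (d @ [y]) \<and> c @ [y] = quad_ex P z lab i (d @ [y])"
      using b(1) by (intro exI[of _ i]) simp
    then show ?thesis unfolding quad_step_def using cy dy lst by blast
  qed
qed

lemma qsim_snoc:
  assumes q: "qsim P z lab c d" and cy: "sat_chain P z (c @ [y])"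
  shows "qsim P z lab (c @ [y]) (d @ [y])"
proof -
  have lcd: "last c = last d" and rt: "(quad_step P z lab)\<^sup>*\<^sup>* c d" using q unfolding qsim_def by auto
  have "(quad_step P z lab)\<^sup>*\<^sup>* (c @ [y]) (e @ [y]) \<and> sat_chain P z (e @ [y])"
    if "(quad_step P z lab)\<^sup>*\<^sup>* c e" for e
    using that
  proof (induction rule: rtranclp_induct)
    case base then show ?case using cy by simp
  next
    case (step e f)
    have "quad_step P z lab (e @ [y]) (f @ [y])" using quad_step_snoc step by blast
    then show ?case using step quad_step_def by (meson rtranclp.rtrancl_into_rtrancl)
  qed
  then show ?thesis using rt cy unfolding qsim_def by auto
qed

end


context cw begin

lemma exists_af: "sat_chain P z c \<Longrightarrow> \<exists>d. qsim P z lab c d \<and> ascent_free (word P z lab d)"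
proof (induction c rule: measure_induct_rule[of "\<lambda>c. ninv (word P z lab c)"])
  case (less c)
  show ?case
  proof (cases "ascent_free (word P z lab c)")
    case True then show ?thesis using qsim_refl[OF less.prems] by blast
  next
    case False
    then obtain j where j: "Suc j < length (word P z lab c)"
      "word P z lab c ! j < word P z lab c ! Suc j"
      unfolding ascent_free_def by blast
    define i where "i = Suc j"
    have i: "Suc i < length c" using j(1) i_def by (simp add: length_word)
    have lm: "length c \<le> length (ext_chain P z c)" using ext_len[OF less.prems] .
    have asc: "ascent_at lab (ext_chain P z c) i"
      unfolding ascent_at_def using j i lm i_def by (simp add: word_def)
    define c' where "c' = quad_ex P z lab i c"
    have q: "sat_chain P z c'" "last c' = last c" "sort_step (word P z lab c) (word P z lab c')"
      using quad_ex_main[OF less.prems i asc] c'_def by auto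
    have qs: "quad_step P z lab c c'"
      unfolding quad_step_def using q less.prems i c'_def by auto
    then have qc: "qsim P z lab c c'" unfolding qsim_def using q less.prems by auto
    obtain d where "qsim P z lab c' d" "ascent_free (word P z lab d)"
      using less.IH[OF ninv_step[OF q(3)] q(1)] by blast
    then show ?thesis using qc qsim_trans by blast
  qed
qed

lemma af_unique:
  assumes c: "sat_chain P z c" and d: "sat_chain P z d" and l: "last c = last d"
    and w: "word P z lab c = word P z lab d" and af: "ascent_free (word P z lab c)"
  shows "c = d"
proof (rule ccontr)
  assume ne: "c \<noteq> d"
  have H: "\<forall>r y c c'. sat_chain P z r \<longrightarrow> y \<in> P \<longrightarrow> last r \<le> y \<longrightarrow>
        interval_chain P (last r) y c \<longrightarrow> interval_chain P (last r) y c' \<longrightarrow>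
        ascent_free (rword P z lab r c) \<longrightarrow> ascent_free (rword P z lab r c') \<longrightarrow>
        c \<noteq> c' \<longrightarrow> rword P z lab r c \<noteq> rword P z lab r c'"
    using cwl unfolding CW_labeling_def by (elim conjE)
  have zc: "sat_chain P z [z]" unfolding sat_chain_def cover_chain_def using zP by simp
  have rw: "rword P z lab [z] e = word P z lab e" if "sat_chain P z e" for e
  proof -
    have "e \<noteq> []" "hd e = z" using that sat_ne sat_chain_def by auto
    then have "[z] @ tl e = e" by (cases e) auto
    then show ?thesis unfolding rword_def by simp
  qed
  have ic: "interval_chain P z (last c) c" "interval_chain P z (last c) d"
    using c d l unfolding interval_chain_def sat_chain_def by auto
  have "last c \<in> P" using sat_last[OF c] .
  then show False
    using H[rule_format, OF zc, of "last c" c d] zle ic rw[OF c] rw[OF d] w af ne by simp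
qed

lemma qsim_af_unique:
  assumes q: "qsim P z lab c d" and a: "ascent_free (word P z lab c)" "ascent_free (word P z lab d)"
  shows "c = d"
proof -
  have "word P z lab c = word P z lab d"
    using qsim_sortw[OF q] sortw_af[OF a(1)] sortw_af[OF a(2)] by simp
  then show ?thesis using af_unique qsim_sat[OF q] a by blast
qed

lemma Rchain_eq:
  assumes "sat_chain P z c" "ascent_free (word P z lab c)"
  shows "Rchain P z lab (last c) (word P z lab c) = c"
  unfolding Rchain_def
  by (rule the_equality) (use assms af_unique in auto)

lemma Rchain_spec:
  assumes "a \<in> Rset P z lab"
  shows "sat_chain P z (Rchain P z lab (fst a) (snd a)) \<and> last (Rchain P z lab (fst a) (snd a)) = fst a
    \<and> word P z lab (Rchain P z lab (fst a) (snd a)) = snd a \<and> ascent_free (snd a)"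
proof -
  obtain c where c: "sat_chain P z c" "last c = fst a" "ascent_free (word P z lab c)" "snd a = word P z lab c"
    using assms unfolding Rset_def by auto
  then show ?thesis using Rchain_eq[OF c(1) c(3)] by simp
qed

definition rep :: "'a list \<Rightarrow> 'a list" where
  "rep c = (SOME d. qsim P z lab c d \<and> ascent_free (word P z lab d))"

definition G :: "'a list \<Rightarrow> 'a \<times> 'l list" where
  "G c = (last c, word P z lab (rep c))"

definition fR :: "'a \<times> 'l list \<Rightarrow> 'a list set" where
  "fR a = {d. qsim P z lab (Rchain P z lab (fst a) (snd a)) d}"

lemma rep_spec: "sat_chain P z c \<Longrightarrow> qsim P z lab c (rep c) \<and> ascent_free (word P z lab (rep c))"
  unfolding rep_def using exists_af by (rule someI_ex) 

lemma G_spec: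
  assumes c: "sat_chain P z c"
  shows "G c \<in> Rset P z lab" "Rchain P z lab (fst (G c)) (snd (G c)) = rep c"
    "fR (G c) = {d. qsim P z lab c d}"
proof -
  have r: "qsim P z lab c (rep c)" "ascent_free (word P z lab (rep c))" using rep_spec[OF c] by auto
  have s: "sat_chain P z (rep c)" "last (rep c) = last c" using qsim_sat[OF r(1)] by auto
  show "G c \<in> Rset P z lab" unfolding Rset_def G_def using s r by auto
  show rc: "Rchain P z lab (fst (G c)) (snd (G c)) = rep c"
    unfolding G_def using Rchain_eq[OF s(1) r(2)] s(2) by simp
  show "fR (G c) = {d. qsim P z lab c d}"
    unfolding fR_def rc using qsim_class[OF r(1)] by simp
qed

lemma fR_inj: "inj_on fR (Rset P z lab)"
proof (rule inj_onI)
  fix a b assume a: "a \<in> Rset P z lab" and b: "b \<in> Rset P z lab" and e: "fR a = fR b"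
  let ?ra = "Rchain P z lab (fst a) (snd a)" and ?rb = "Rchain P z lab (fst b) (snd b)"
  have sa: "sat_chain P z ?ra" "last ?ra = fst a" "word P z lab ?ra = snd a" "ascent_free (snd a)"
    using Rchain_spec[OF a] by auto
  have sb: "sat_chain P z ?rb" "last ?rb = fst b" "word P z lab ?rb = snd b" "ascent_free (snd b)"
    using Rchain_spec[OF b] by auto
  have "?ra \<in> fR a" unfolding fR_def using qsim_refl[OF sa(1)] by simp
  then have "qsim P z lab ?rb ?ra" using e unfolding fR_def by simp
  then have "?rb = ?ra" using qsim_af_unique sa sb by simp
  then show "a = b" using sa sb by (metis prod.collapse)
qed

lemma fR_image: "fR ` Rset P z lab = Qset P z lab"
proof
  show "fR ` Rset P z lab \<subseteq> Qset P z lab"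
  proof
    fix X assume "X \<in> fR ` Rset P z lab"
    then obtain a where a: "a \<in> Rset P z lab" "X = fR a" by blast
    then show "X \<in> Qset P z lab" unfolding Qset_def fR_def using Rchain_spec[OF a(1)] by auto
  qed
  show "Qset P z lab \<subseteq> fR ` Rset P z lab"
  proof
    fix X assume "X \<in> Qset P z lab"
    then obtain c where c: "sat_chain P z c" "X = {d. qsim P z lab c d}" unfolding Qset_def by auto
    then show "X \<in> fR ` Rset P z lab" using G_spec[OF c(1)] by (metis image_eqI)
  qed
qed

lemma Rle_trans: "Rle P z lab a b \<Longrightarrow> Rle P z lab b c \<Longrightarrow> Rle P z lab a c"
  unfolding Rle_def using rtranclp_trans[of "Rcov P z lab" a b c] by blast

lemma Rcov_G:
  assumes c: "sat_chain P z c" and cy: "sat_chain P z (c @ [y])"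
  shows "Rcov P z lab (G c) (G (c @ [y]))"
proof -
  define r where "r = rep c"
  have r: "qsim P z lab c r" "ascent_free (word P z lab r)" using rep_spec[OF c] r_def by auto
  have s: "sat_chain P z r" "last r = last c" using qsim_sat[OF r(1)] by auto
  have cv: "cov P (last c) y" using sat_snoc[OF c] cy by simp
  have ry: "sat_chain P z (r @ [y])" using sat_snoc[OF s(1)] cv s(2) by simp
  have q1: "qsim P z lab (c @ [y]) (r @ [y])" using qsim_snoc[OF r(1) cy] .
  have q2: "qsim P z lab (c @ [y]) (rep (c @ [y]))"
    and af2: "ascent_free (word P z lab (rep (c @ [y])))" using rep_spec[OF cy] by auto
  have q3: "qsim P z lab (r @ [y]) (rep (c @ [y]))" using qsim_trans[OF qsim_sym[OF q1] q2] .
  have "sortw (word P z lab (r @ [y])) = word P z lab (rep (c @ [y]))"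
    using qsim_sortw[OF q3] sortw_af[OF af2] by simp
  then have wd: "word P z lab (rep (c @ [y])) = sortw (word P z lab r @ [ext_label P z lab r y])"
    using word_snoc[OF ry s(1)] by simp
  show ?thesis
    unfolding Rcov_def
    using G_spec(1)[OF c] G_spec(1)[OF cy] G_spec(2)[OF c] cv wd r_def
    by (simp add: G_def)
qed

lemma G_prefix:
  "sat_chain P z (c @ e) \<Longrightarrow> sat_chain P z c \<Longrightarrow> Rle P z lab (G c) (G (c @ e))"
proof (induction e rule: rev_induct)
  case Nil
  then show ?case unfolding Rle_def using G_spec(1)[OF Nil(2)] by simp
next
  case (snoc y e)
  have ce: "sat_chain P z (c @ e)"
    using sat_take[OF snoc.prems(1), of "length (c @ e)"] sat_ne[OF snoc.prems(2)] by simp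
  have "Rcov P z lab (G (c @ e)) (G ((c @ e) @ [y]))"
    using Rcov_G[OF ce] snoc.prems(1) by simp
  then have "Rle P z lab (G (c @ e)) (G (c @ e @ [y]))"
    unfolding Rle_def using G_spec(1) ce snoc.prems(1) by auto
  then show ?case using Rle_trans snoc.IH[OF ce snoc.prems(2)] by blast
qed

lemma Qset_class: "X \<in> Qset P z lab \<Longrightarrow> c \<in> X \<Longrightarrow> sat_chain P z c \<and> X = {d. qsim P z lab c d}"
  unfolding Qset_def using qsim_class qsim_sat by auto

lemma g_G:
  assumes c: "sat_chain P z c"
  shows "inv_into (Rset P z lab) fR {d. qsim P z lab c d} = G c"
  using inv_into_f_eq[OF fR_inj G_spec(1)[OF c] G_spec(3)[OF c]] .

lemma Qle_Rle:
  assumes "Qle P z lab X Y"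
  shows "Rle P z lab (inv_into (Rset P z lab) fR X) (inv_into (Rset P z lab) fR Y)"
  using assms unfolding Qle_def
proof (induction rule: tranclp_induct)
  case (base Y)
  then obtain c d where cd: "X \<in> Qset P z lab" "Y \<in> Qset P z lab" "c \<in> X" "d \<in> Y" "set c \<subseteq> set d"
    by blast
  have c: "sat_chain P z c" "X = {e. qsim P z lab c e}" using Qset_class[OF cd(1) cd(3)] by auto
  have d: "sat_chain P z d" "Y = {e. qsim P z lab d e}" using Qset_class[OF cd(2) cd(4)] by auto
  obtain e where e: "d = c @ e"
    using cover_chain_prefix[of P c d] c(1) d(1) cd(5) unfolding sat_chain_def by auto
  show ?case using G_prefix[of c e] c d e g_G by simp
next
  case (step Y Z)
  obtain d e where cd: "Y \<in> Qset P z lab" "Z \<in> Qset P z lab" "d \<in> Y" "e \<in> Z" "set d \<subseteq> set e"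
    using step(2) by blast
  have d: "sat_chain P z d" "Y = {x. qsim P z lab d x}" using Qset_class[OF cd(1) cd(3)] by auto
  have e: "sat_chain P z e" "Z = {x. qsim P z lab e x}" using Qset_class[OF cd(2) cd(4)] by auto
  obtain t where t: "e = d @ t"
    using cover_chain_prefix[of P d e] d(1) e(1) cd(5) unfolding sat_chain_def by auto
  have "Rle P z lab (inv_into (Rset P z lab) fR Y) (inv_into (Rset P z lab) fR Z)"
    using G_prefix[of d t] d e t g_G by simp
  then show ?case using step(3) Rle_trans by blast
qed

lemma Rcov_Qle:
  assumes rc: "Rcov P z lab a b"
  shows "Qle P z lab (fR a) (fR b)"
proof -
  have a: "a \<in> Rset P z lab" and b: "b \<in> Rset P z lab" and cv: "cov P (fst a) (fst b)"
    and sb: "snd b = sortw (snd a @ [ext_label P z lab (Rchain P z lab (fst a) (snd a)) (fst b)])"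
    using rc unfolding Rcov_def by auto
  define r where "r = Rchain P z lab (fst a) (snd a)"
  have r: "sat_chain P z r" "last r = fst a" "word P z lab r = snd a"
    using Rchain_spec[OF a] r_def by auto
  define y where "y = fst b"
  have ry: "sat_chain P z (r @ [y])" using sat_snoc[OF r(1)] cv r(2) y_def by simp
  define d where "d = rep (r @ [y])"
  have d: "qsim P z lab (r @ [y]) d" "ascent_free (word P z lab d)" using rep_spec[OF ry] d_def by auto
  have sd: "sat_chain P z d" "last d = y" using qsim_sat[OF d(1)] by auto
  have "sortw (word P z lab (r @ [y])) = word P z lab d"
    using qsim_sortw[OF d(1)] sortw_af[OF d(2)] by simp
  then have wd: "word P z lab d = snd b"
    using word_snoc[OF ry r(1)] sb r(3) r_def y_def by simp
  have rb: "Rchain P z lab (fst b) (snd b) = d"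
    using Rchain_eq[OF sd(1) d(2)] sd(2) wd y_def by simp
  have fb: "fR b = {x. qsim P z lab d x}" unfolding fR_def rb by simp
  have inQ: "fR a \<in> Qset P z lab" "fR b \<in> Qset P z lab" using fR_image a b by auto
  have "r \<in> fR a" unfolding fR_def r_def[symmetric] using qsim_refl[OF r(1)] by simp
  moreover have "r @ [y] \<in> fR b" unfolding fb using qsim_sym[OF d(1)] by simp
  moreover have "set r \<subseteq> set (r @ [y])" by auto
  ultimately show ?thesis unfolding Qle_def using inQ by (intro tranclp.r_into_trancl) blast
qed

lemma Rle_Qle:
  assumes "Rle P z lab a b"
  shows "Qle P z lab (fR a) (fR b)"
proof -
  have a: "a \<in> Rset P z lab" and rt: "(Rcov P z lab)\<^sup>*\<^sup>* a b" using assms unfolding Rle_def by auto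
  have base: "Qle P z lab (fR a) (fR a)"
  proof -
    let ?r = "Rchain P z lab (fst a) (snd a)"
    have "?r \<in> fR a" unfolding fR_def using qsim_refl Rchain_spec[OF a] by simp
    moreover have "fR a \<in> Qset P z lab" using fR_image a by auto
    ultimately show ?thesis unfolding Qle_def by (intro tranclp.r_into_trancl) blast
  qed
  show ?thesis using rt
  proof (induction rule: rtranclp_induct)
    case base then show ?case using \<open>Qle P z lab (fR a) (fR a)\<close> .
  next
    case (step b c)
    then show ?case using Rcov_Qle[OF step(2)] unfolding Qle_def by (meson tranclp_trans)
  qed
qed

lemma main:
  "\<exists>f. bij_betw f (Rset P z lab) (Qset P z lab) \<and>
     (\<forall>a\<in>Rset P z lab. \<forall>b\<in>Rset P z lab. Rle P z lab a b \<longleftrightarrow> Qle P z lab (f a) (f b))"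
proof (intro exI[of _ fR] conjI ballI iffI)
  show "bij_betw fR (Rset P z lab) (Qset P z lab)"
    unfolding bij_betw_def using fR_inj fR_image by blast
next
  fix a b assume "Rle P z lab a b" then show "Qle P z lab (fR a) (fR b)" by (rule Rle_Qle)
next
  fix a b assume a: "a \<in> Rset P z lab" and b: "b \<in> Rset P z lab" and q: "Qle P z lab (fR a) (fR b)"
  show "Rle P z lab a b" using Qle_Rle[OF q] inv_into_f_f[OF fR_inj a] inv_into_f_f[OF fR_inj b] by simp
qed

end

theorem theorem4p5:
  fixes P :: "'a::order set" and z :: 'a and lab :: "'a list \<Rightarrow> nat \<Rightarrow> 'l::order"
  assumes "fin_graded_bot P z"
    and "CW_labeling P z lab"
  shows "\<exists>f. bij_betw f (Rset P z lab) (Qset P z lab) \<and>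
           (\<forall>a\<in>Rset P z lab. \<forall>b\<in>Rset P z lab. Rle P z lab a b \<longleftrightarrow> Qle P z lab (f a) (f b))"
proof -
  interpret cw P z lab using assms by unfold_locales
  show ?thesis by (rule main)
qed


end
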